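(* Let $m\ge1$ and let $\widehat K_m$ be the finite cover of $K_{m,m}$ described below, viewed as a square subcomplex of the $2$–skeleton of $\mathcal T_{2m+1}$. Then (a) hyperplanes of $\widehat K_m$ do not self-intersect; (b) hyperplanes of $\widehat K_m$ do not self-osculate; (c) hyperplanes of $\widehat K_m$ are two-sided.
   Context: $G_{m,m}=\langle a_1,\dots,a_{2m+1}\mid [a_i,a_{i+1}]=1\ (1\le i\le m),\ a_{m+j+1}^{-1}a_ja_{m+j+1}=a_{m+j}\ (1\le j\le m)\rangle$ and $K_{m,m}$ is its presentation square complex. Let $H_n=\{0,1\}^n\subset H_{n+1}$ (append $0$), $H_n^*\subset H_{n+1}$ the tuples with last coordinate $1$, $\beta_i$ the flip of coordinate $i$, $\varphi_{k,m+k}$ the swap of coordinates $k$ and $m+k$. The right action $\pi$ of $G_{m,m}$ on $H_{2m+1}$ is defined by: $\pi(a_i)=\beta_i$ on $H_{m+1}$ ($i\le m+1$); for $k=1,\dots,m$, $\pi(a_{m+k+1})=\beta_{m+k+1}$ on $H_{m+k+1}$, and $\pi(a_j)|_{H^*_{m+k}}=\beta_{m+k+1}\circ\varphi_{k,m+k}\circ\pi(a_j)|_{H_{m+k}}\circ\varphi_{k,m+k}\circ\beta_{m+k+1}$ for $j\le m+k$. $\widehat K_m$ is the covering of $K_{m,m}$ corresponding to the stabilizer of $(0,\dots,0)$; its vertices are identified with $H_{2m+1}$, and it embeds cellularly into the $2$–skeleton of the torus $\mathcal T_{2m+1}=(\mathbb R/2\mathbb Z)^{2m+1}$ (product CW structure,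 each factor having $0$–cells $0,1$ and $1$–cells $[0,1],[1,2]$). A hyperplane of a square complex is a component of the complex formed by midcubes (midlines of squares and midpoints of edges). It self-intersects if it contains both midlines of some square; it self-osculates if two distinct dual edges share a vertex without lying in a common square; it is two-sided if there is a combinatorial map $H\times[0,1]\to X$ restricting to the identity on $H\times\{1/2\}$. *)

theory Defs
  imports Main
begin

text \<open>A square complex is given by a set of (oriented) edges, endpoint data,
 a set of squares, and for every square s and k < 4 its k-th boundary side
 sd s k = (e, fw): the edge e, traversed forwards (fw) or backwards along the
 boundary cycle.  Side k runs from corner k to corner k+1; sides k and k+2
 are opposite.  The midline number k (k < 2) of s joins the midpoints of
 sides k and k+2.\<close>

definition opp_sides :: "'s set \<Rightarrow> ('s \<Rightarrow> nat \<Rightarrow> 'e \<times> bool) \<Rightarrow> 'e \<Rightarrow> 'e \<Rightarrow> bool" where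
  "opp_sides S sd e f \<longleftrightarrow>
     (\<exists>s\<in>S. \<exists>k<4. fst (sd s k) = e \<and> fst (sd s ((k + 2) mod 4)) = f)"

text \<open>A hyperplane (component of the complex of midcubes) is recorded by the
 set of its dual edges (edge midpoints it contains).\<close>
definition hyperplanes :: "'e set \<Rightarrow> 's set \<Rightarrow> ('s \<Rightarrow> nat \<Rightarrow> 'e \<times> bool) \<Rightarrow> 'e set set" where
  "hyperplanes E S sd = {{f \<in> E. (opp_sides S sd)\<^sup>*\<^sup>* e f} | e. e \<in> E}"

text \<open>H contains both midlines of some square.\<close>
definition self_intersects :: "'s set \<Rightarrow> ('s \<Rightarrow> nat \<Rightarrow> 'e \<times> bool) \<Rightarrow> 'e set \<Rightarrow> bool" where
  "self_intersects S sd H \<longleftrightarrow> (\<exists>s\<in>S. fst (sd s 0) \<in> H \<and> fst (sd s 1) \<in> H)"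

definition self_osculates :: "'s set \<Rightarrow> ('s \<Rightarrow> nat \<Rightarrow> 'e \<times> bool) \<Rightarrow> ('e \<Rightarrow> 'v set) \<Rightarrow> 'e set \<Rightarrow> bool" where
  "self_osculates S sd ends H \<longleftrightarrow>
     (\<exists>e\<in>H. \<exists>f\<in>H. e \<noteq> f \<and> ends e \<inter> ends f \<noteq> {} \<and>
        \<not> (\<exists>s\<in>S. \<exists>k<4. \<exists>l<4. fst (sd s k) = e \<and> fst (sd s l) = f))"

text \<open>Two-sidedness: a combinatorial map H x [0,1] -> X which is the identity on
 H x {1/2}.  Such a map is given by (i) for every dual edge e, the image of the
 vertical edge e x [0,1], which is e itself with one of its two orientations:
 ori e = True means e x {0} goes to the source of e; (ii) for every midline
 (s,k) of H, the image of the square (s,k) x [0,1], which is the square s,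
 fixing the midline pointwise: \<rho> s k = True means the corner (side k) x {0}
 goes to the start corner of side k (in the boundary traversal), which forces
 (side k+2) x {0} to go to the end corner of side k+2; \<rho> s k = False is the
 reflected map.  Combinatoriality = these cell maps agree on common faces.\<close>
definition two_sided :: "'s set \<Rightarrow> ('s \<Rightarrow> nat \<Rightarrow> 'e \<times> bool) \<Rightarrow> 'e set \<Rightarrow> bool" where
  "two_sided S sd H \<longleftrightarrow>
     (\<exists>(ori::'e \<Rightarrow> bool) (\<rho>::'s \<Rightarrow> nat \<Rightarrow> bool). \<forall>s\<in>S. \<forall>k<2. fst (sd s k) \<in> H \<longrightarrow>
        ori (fst (sd s k)) = (snd (sd s k) = \<rho> s k) \<and>
        ori (fst (sd s (k + 2))) = (snd (sd s (k + 2)) = (\<not> \<rho> s k)))"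

text \<open>A 0/1-tuple of length n is encoded as the set of coordinates (in 1..n)
 equal to 1.  H_n is Pow {1..n}; H_n \<subseteq> H_{n+1} by appending a 0.\<close>

definition Hcube :: "nat \<Rightarrow> nat set set" where
  "Hcube n = {x. x \<subseteq> {1..n}}"

definition flip :: "nat \<Rightarrow> nat set \<Rightarrow> nat set" where
  "flip i x = (if i \<in> x then x - {i} else insert i x)"

definition swp :: "nat \<Rightarrow> nat \<Rightarrow> nat set \<Rightarrow> nat set" where
  "swp k l x = {n. (if n = k then l else if n = l then k else n) \<in> x}"

text \<open>piK m k j : the permutation \<pi>(a_j) on H_{m+k+1} (for j \<le> m+k+1), after
 stage k of the inductive construction (stage 0 = the base step on H_{m+1}).\<close>
fun piK :: "nat \<Rightarrow> nat \<Rightarrow> nat \<Rightarrow> nat set \<Rightarrow> nat set" where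
  "piK m 0 j x = flip j x"
| "piK m (Suc k) j x =
     (if j = m + k + 2 then flip (m + k + 2) x
      else if m + k + 2 \<in> x then
        flip (m + k + 2) (swp (k + 1) (m + k + 1) (piK m k j (swp (k + 1) (m + k + 1) (flip (m + k + 2) x))))
      else piK m k j x)"

definition act :: "nat \<Rightarrow> nat \<Rightarrow> nat set \<Rightarrow> nat set" where
  "act m j = piK m m j"

definition Kverts :: "nat \<Rightarrow> nat set set" where
  "Kverts m = Hcube (2 * m + 1)"

text \<open>Edge (v, i): the lift at v of the loop a_i, from v to v.\<pi>(a_i).\<close>
definition Kedges :: "nat \<Rightarrow> (nat set \<times> nat) set" where
  "Kedges m = Kverts m \<times> {1..2 * m + 1}"

definition Kends :: "nat \<Rightarrow> nat set \<times> nat \<Rightarrow> nat set set" where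
  "Kends m e = {fst e, act m (snd e) (fst e)}"

text \<open>Relators: r = i \<le> m gives [a_i, a_(i+1)] = a_i a_(i+1) a_i^-1 a_(i+1)^-1;
 r = m + j gives a_(m+j+1)^-1 a_j a_(m+j+1) a_(m+j)^-1.  Letters are (generator, positive?).\<close>
definition relword :: "nat \<Rightarrow> nat \<Rightarrow> (nat \<times> bool) list" where
  "relword m r =
     (if r \<le> m then [(r, True), (r + 1, True), (r, False), (r + 1, False)]
      else [(r + 1, False), (r - m, True), (r + 1, True), (r, False)])"

definition step :: "nat \<Rightarrow> nat set \<Rightarrow> nat \<times> bool \<Rightarrow> nat set" where
  "step m u l = (if snd l then act m (fst l) u else inv_into (Kverts m) (act m (fst l)) u)"

fun corner :: "nat \<Rightarrow> nat set \<Rightarrow> (nat \<times> bool) list \<Rightarrow> nat \<Rightarrow> nat set" where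
  "corner m v w 0 = v"
| "corner m v w (Suc k) = step m (corner m v w k) (w ! k)"

text \<open>Square (v, r): the lift of the relator square r based at vertex v.\<close>
definition Ksquares :: "nat \<Rightarrow> (nat set \<times> nat) set" where
  "Ksquares m = Kverts m \<times> {1..2 * m}"

definition Kside :: "nat \<Rightarrow> nat set \<times> nat \<Rightarrow> nat \<Rightarrow> (nat set \<times> nat) \<times> bool" where
  "Kside m s k =
     (let w = relword m (snd s); l = w ! k in
      if snd l then ((corner m (fst s) w k, fst l), True)
      else ((corner m (fst s) w (Suc k), fst l), False))"

end

theory Submission
  imports Defs
begin

definition sw :: "nat \<Rightarrow> nat \<Rightarrow> nat \<Rightarrow> nat" where
  "sw k l n = (if n = k then l else if n = l then k else n)"

fun DD :: "nat \<Rightarrow> nat \<Rightarrow> nat set \<Rightarrow> nat \<Rightarrow> nat" where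
  "DD m 0 x n = n"
| "DD m (Suc k) x n = (if m + k + 2 \<in> x
      then sw (k + 1) (m + k + 1) (DD m k (swp (k + 1) (m + k + 1) (flip (m + k + 2) x)) n)
      else DD m k x n)"

lemma mem_flip: "(n \<in> flip i x) = (if n = i then i \<notin> x else n \<in> x)"
  by (auto simp: flip_def)

lemma flip_flip[simp]: "flip i (flip i x) = x"
  by (auto simp: flip_def)

lemma flip_comm: "flip i (flip j x) = flip j (flip i x)"
  by (auto simp: flip_def)

lemma flip_cancel[simp]: "flip i (flip j (flip i x)) = flip j x"
  by (auto simp: flip_def)

lemma corner_step: "k' = Suc k \<Longrightarrow> corner m v w k' = step m (corner m v w k) (w ! k)"
  by simp

lemma sw_sw[simp]: "sw k l (sw k l n) = n"
  by (auto simp: sw_def)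

lemma swp_alt: "swp k l x = {n. sw k l n \<in> x}"
  by (simp add: swp_def sw_def)

lemma swp_swp[simp]: "swp k l (swp k l x) = x"
  by (simp add: swp_alt)

lemma swp_flip: "swp k l (flip c z) = flip (sw k l c) (swp k l z)"
proof (rule set_eqI)
  fix n
  have key: "(sw k l n = c) = (n = sw k l c)" by (metis sw_sw)
  show "n \<in> swp k l (flip c z) \<longleftrightarrow> n \<in> flip (sw k l c) (swp k l z)"
    unfolding swp_alt mem_Collect_eq mem_flip key by simp
qed

lemma DD_fix: "m + k + 1 \<le> n \<Longrightarrow> DD m k x n = n"
  by (induction k arbitrary: x) (auto simp: sw_def)

lemma DD_fix2: "k < n \<Longrightarrow> n \<le> m \<Longrightarrow> DD m k x n = n"
  by (induction k arbitrary: x) (auto simp: sw_def)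

lemma sw_bnd: "z \<le> m + k + 1 \<Longrightarrow> sw (k + 1) (m + k + 1) z \<le> m + k + 1"
  by (simp add: sw_def)

lemma DD_bnd: "n \<le> m + k + 1 \<Longrightarrow> DD m k x n \<le> m + k + 1"
proof (induction k arbitrary: x)
  case 0 then show ?case by simp
next
  case (Suc k)
  show ?case
  proof (cases "n \<le> m + k + 1")
    case True
    then have A: "\<And>y. DD m k y n \<le> m + k + 1" using Suc.IH by blast
    have "DD m (Suc k) x n \<le> m + k + 1"
    proof (cases "m + k + 2 \<in> x")
      case True
      then have "DD m (Suc k) x n = sw (k + 1) (m + k + 1) (DD m k (swp (k + 1) (m + k + 1) (flip (m + k + 2) x)) n)"
        by simp
      then show ?thesis using A sw_bnd by metis
    next
      case False
      then have "DD m (Suc k) x n = DD m k x n" by simp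
      then show ?thesis using A by metis
    qed
    then show ?thesis by simp
  next
    case False
    then have "n = m + k + 2" using Suc.prems by simp
    then show ?thesis by (simp add: DD_fix sw_def)
  qed
qed

lemma DD_pos: "1 \<le> n \<Longrightarrow> 1 \<le> DD m k x n"
  by (induction k arbitrary: x) (auto simp: sw_def)

lemma DD_inj: "DD m k x a = DD m k x b \<Longrightarrow> a = b"
proof (induction k arbitrary: x)
  case 0 then show ?case by simp
next
  case (Suc k)
  then show ?case by (simp split: if_splits) (metis sw_sw)
qed

lemma piK_DD: "piK m k j x = flip (DD m k x j) x"
proof (induction k arbitrary: j x)
  case 0 then show ?case by simp
next
  case (Suc k)
  show ?case
  proof (cases "j = m + k + 2")
    case True
    then show ?thesis using DD_fix[of m "Suc k" j x] by simp
  next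
    case False
    show ?thesis
    proof (cases "m + k + 2 \<in> x")
      case True
      define y where "y = swp (k + 1) (m + k + 1) (flip (m + k + 2) x)"
      have e1: "piK m (Suc k) j x = flip (m + k + 2) (swp (k + 1) (m + k + 1) (flip (DD m k y j) y))"
        using False True Suc.IH unfolding y_def by simp
      have sy: "swp (k + 1) (m + k + 1) y = flip (m + k + 2) x" unfolding y_def by simp
      have e2: "swp (k + 1) (m + k + 1) (flip (DD m k y j) y)
          = flip (sw (k + 1) (m + k + 1) (DD m k y j)) (flip (m + k + 2) x)"
        using swp_flip[of "k+1" "m+k+1" "DD m k y j" y] sy by simp
      have e3: "DD m (Suc k) x j = sw (k + 1) (m + k + 1) (DD m k y j)"
        using True unfolding y_def by simp
      show ?thesis unfolding e1 e2 e3 by (rule flip_cancel)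
    next
      case F: False
      then show ?thesis using False Suc.IH by simp
    qed
  qed
qed

definition Sq :: "nat \<Rightarrow> nat \<Rightarrow> nat \<Rightarrow> nat \<Rightarrow> nat \<Rightarrow> bool" where
  "Sq m k g h h' \<longleftrightarrow> (\<forall>x. DD m k (flip (DD m k x g) x) h = DD m k x h')"

lemma Sq_step:
  assumes "g \<le> m + k + 1" "Sq m k g h h'"
  shows "Sq m (Suc k) g h h'"
  unfolding Sq_def
proof
  fix x
  define p where "p = m + k + 2"
  show "DD m (Suc k) (flip (DD m (Suc k) x g) x) h = DD m (Suc k) x h'"
  proof (cases "p \<in> x")
    case True
    define y where "y = swp (k + 1) (m + k + 1) (flip p x)"
    define a where "a = sw (k + 1) (m + k + 1) (DD m k y g)"
    have b: "DD m k y g \<le> m + k + 1" using DD_bnd assms(1) by blast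
    have "a \<le> m + k + 1" using b unfolding a_def sw_def by auto
    then have ap: "a \<noteq> p" unfolding p_def by simp
    have e1: "DD m (Suc k) x g = a" using True unfolding a_def y_def p_def by simp
    have pin: "p \<in> flip a x" using True ap by (simp add: mem_flip)
    have "swp (k + 1) (m + k + 1) (flip p (flip a x)) = flip (DD m k y g) y"
      unfolding y_def a_def by (simp add: flip_comm[of p] swp_flip)
    then have "DD m (Suc k) (flip a x) h = sw (k + 1) (m + k + 1) (DD m k (flip (DD m k y g) y) h)"
      using pin unfolding p_def by simp
    also have "\<dots> = sw (k + 1) (m + k + 1) (DD m k y h')"
      using assms(2) unfolding Sq_def by simp
    also have "\<dots> = DD m (Suc k) x h'" using True unfolding y_def p_def by simp
    finally show ?thesis using e1 by simp
  next
    case False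
    define a where "a = DD m k x g"
    have "a \<le> m + k + 1" using DD_bnd assms(1) unfolding a_def by blast
    then have ap: "a \<noteq> p" unfolding p_def by simp
    have e1: "DD m (Suc k) x g = a" using False unfolding a_def p_def by simp
    have pin: "p \<notin> flip a x" using False ap by (simp add: mem_flip)
    have "DD m (Suc k) (flip a x) h = DD m k (flip a x) h" using pin unfolding p_def by simp
    also have "\<dots> = DD m k x h'" using assms(2) unfolding Sq_def a_def by simp
    also have "\<dots> = DD m (Suc k) x h'" using False unfolding p_def by simp
    finally show ?thesis using e1 by simp
  qed
qed

lemma Sq_mono:
  assumes "k \<le> k'" "g \<le> m + k + 1" "Sq m k g h h'"
  shows "Sq m k' g h h'"
  using assms(1)
proof (induction k' rule: dec_induct)
  case base then show ?case using assms by simp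
next
  case (step n)
  then show ?case using Sq_step[of g m n h h'] assms(2) by simp
qed

lemma Sq_inv: "Sq m k g g g"
proof (induction k)
  case 0 then show ?case by (simp add: Sq_def)
next
  case (Suc k)
  show ?case
  proof (cases "g \<le> m + k + 1")
    case True then show ?thesis using Sq_step Suc by blast
  next
    case False
    then show ?thesis unfolding Sq_def using DD_fix[of m "Suc k" g] by simp
  qed
qed

lemma Sq_comm: "g \<le> m + 1 \<Longrightarrow> Sq m k g h h"
  using Sq_mono[of 0 k g m h h] by (simp add: Sq_def)

lemma Sq_stage:
  assumes "1 \<le> j" "j \<le> m"
  shows "Sq m j j (m + j + 1) (m + j + 1)" "Sq m j (m + j + 1) (m + j) j"
proof -
  obtain k where j: "j = Suc k" using assms by (cases j) auto
  have f1: "\<And>x. DD m j x (m + j + 1) = m + j + 1" using DD_fix[of m j] by simp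
  have f2: "\<And>y. DD m k y j = j" using DD_fix2[of k j m] j assms by simp
  have f3: "\<And>y. DD m k y (m + j) = m + j" using DD_fix[of m k "m + j"] j by simp
  have g2: "\<And>x. DD m j x j = (if m + j + 1 \<in> x then m + j else j)"
    using f2 j by (simp add: sw_def)
  have g3: "\<And>x. DD m j x (m + j) = (if m + j + 1 \<in> x then j else m + j)"
    using f3 j by (simp add: sw_def)
  show "Sq m j j (m + j + 1) (m + j + 1)" using f1 by (simp add: Sq_def)
  show "Sq m j (m + j + 1) (m + j) j" using f1 g2 g3 by (simp add: Sq_def mem_flip)
qed



lemma act_flip: "act m g u = flip (DD m m u g) u"
  by (simp add: act_def piK_DD)

lemma DD_range: "g \<in> {1..2*m+1} \<Longrightarrow> DD m m u g \<in> {1..2*m+1}"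
  using DD_bnd[of g m m u] DD_pos[of g m m u] by auto

lemma act_Kverts: "u \<in> Kverts m \<Longrightarrow> g \<in> {1..2*m+1} \<Longrightarrow> act m g u \<in> Kverts m"
  using DD_range[of g m u] unfolding act_flip Kverts_def Hcube_def flip_def by auto

lemma act_act: "act m g (act m g u) = u"
  using Sq_inv[of m m g] unfolding act_flip Sq_def by simp

lemma step_eq:
  assumes "u \<in> Kverts m" "g \<in> {1..2*m+1}"
  shows "step m u (g, b) = act m g u"
proof (cases b)
  case True then show ?thesis by (simp add: step_def)
next
  case False
  have inj: "inj_on (act m g) (Kverts m)"
    by (metis act_act inj_onI)
  have "inv_into (Kverts m) (act m g) (act m g (act m g u)) = act m g u"
    using inv_into_f_f[OF inj act_Kverts[OF assms]] .
  then show ?thesis using False by (simp add: step_def act_act)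
qed

definition edir :: "nat \<Rightarrow> nat set \<times> nat \<Rightarrow> nat" where
  "edir m e = DD m m (fst e) (snd e)"

definition lab :: "nat \<Rightarrow> nat set \<times> nat \<Rightarrow> nat \<times> bool" where
  "lab m e = (edir m e, edir m e \<in> fst e)"

definition ori :: "nat \<Rightarrow> nat set \<times> nat \<Rightarrow> bool" where
  "ori m e = (edir m e \<notin> fst e)"

definition SQP :: "nat \<Rightarrow> nat set \<times> nat \<Rightarrow> bool" where
  "SQP m s \<longleftrightarrow>
     lab m (fst (Kside m s 0)) = lab m (fst (Kside m s 2)) \<and>
     lab m (fst (Kside m s 1)) = lab m (fst (Kside m s 3)) \<and>
     edir m (fst (Kside m s 0)) \<noteq> edir m (fst (Kside m s 1)) \<and>
     ori m (fst (Kside m s 2)) = (snd (Kside m s 2) = (ori m (fst (Kside m s 0)) \<noteq> snd (Kside m s 0))) \<and>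
     ori m (fst (Kside m s 3)) = (snd (Kside m s 3) = (ori m (fst (Kside m s 1)) \<noteq> snd (Kside m s 1)))"

lemma Kside_eq: "k' = Suc k \<Longrightarrow> Kside m (v, r) k =
   (if snd (relword m r ! k) then ((corner m v (relword m r) k, fst (relword m r ! k)), True)
    else ((corner m v (relword m r) k', fst (relword m r ! k)), False))"
  by (simp add: Kside_def Let_def)

lemma SQP_comm:
  assumes v: "v \<in> Kverts m" and r: "1 \<le> r" "r \<le> m"
  shows "SQP m (v, r)"
proof -
  define a where "a = DD m m v r"
  define b where "b = DD m m v (r + 1)"
  have fa: "DD m m (flip a v) (r + 1) = b"
    using Sq_comm[of r m m "r+1"] r unfolding Sq_def a_def b_def by simp
  have fb: "DD m m (flip b v) r = a"
    using Sq_comm[of "r+1" m m r] r unfolding Sq_def a_def b_def by simp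
  have ab: "a \<noteq> b" unfolding a_def b_def using DD_inj by fastforce
  have bS: "DD m m v (Suc r) = b" unfolding b_def by simp
  have fbb: "DD m m (flip b v) (r + 1) = b"
    using Sq_inv[of m m "r+1"] unfolding Sq_def b_def by simp
  have faa: "DD m m (flip a (flip b v)) r = a"
    using Sq_inv[of m m r] fb unfolding Sq_def by metis
  define w where "w = relword m r"
  have w: "w = [(r,True),(r+1,True),(r,False),(r+1,False)]"
    using r unfolding w_def relword_def by simp
  have wk: "w!0 = (r,True)" "w!1 = (r+1,True)" "w!2 = (r,False)" "w!3 = (r+1,False)"
    using w by simp_all
  have rg: "r \<in> {1..2*m+1}" "r + 1 \<in> {1..2*m+1}" using r by auto
  have k1: "flip a v \<in> Kverts m"
    using act_Kverts[OF v rg(1)] by (simp add: act_flip a_def)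
  have k2: "flip b (flip a v) \<in> Kverts m"
    using act_Kverts[OF k1 rg(2)] by (simp only: act_flip fa)
  have k3: "flip b v \<in> Kverts m"
    using act_Kverts[OF v rg(2)] by (simp add: act_flip b_def)
  have c1: "corner m v w 1 = flip a v"
  proof -
    have "corner m v w 1 = step m (corner m v w 0) (w!0)" by (rule corner_step) simp
    also have "\<dots> = act m r v" using wk by (simp add: step_def)
    finally show ?thesis by (simp add: act_flip a_def)
  qed
  have c2: "corner m v w 2 = flip b (flip a v)"
  proof -
    have "corner m v w 2 = step m (corner m v w 1) (w!1)" by (rule corner_step) simp
    also have "\<dots> = act m (r + 1) (flip a v)" unfolding c1 wk by (simp add: step_def)
    also have "\<dots> = flip b (flip a v)" by (simp only: act_flip fa)
    finally show ?thesis .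
  qed
  have c3: "corner m v w 3 = flip b v"
  proof -
    have "corner m v w 3 = step m (corner m v w 2) (w!2)" by (rule corner_step) simp
    also have "\<dots> = act m r (flip b (flip a v))" unfolding c2 wk by (rule step_eq[OF k2 rg(1)])
    also have "\<dots> = flip b v" unfolding act_flip flip_comm[of b a] faa by simp
    finally show ?thesis .
  qed
  have c4: "corner m v w 4 = v"
  proof -
    have "corner m v w 4 = step m (corner m v w 3) (w!3)" by (rule corner_step) simp
    also have "\<dots> = act m (r + 1) (flip b v)" unfolding c3 wk by (rule step_eq[OF k3 rg(2)])
    also have "\<dots> = v" unfolding act_flip fbb by simp
    finally show ?thesis .
  qed
  have s0: "Kside m (v, r) 0 = ((v, r), True)"
    using Kside_eq[of 1 0 m v r] wk unfolding w_def by simp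
  have s1: "Kside m (v, r) 1 = ((flip a v, r + 1), True)"
    using Kside_eq[of 2 1 m v r] wk c1 unfolding w_def by simp
  have s2: "Kside m (v, r) 2 = ((flip b v, r), False)"
    using Kside_eq[of 3 2 m v r] wk c3 unfolding w_def by simp
  have s3: "Kside m (v, r) 3 = ((v, r + 1), False)"
    using Kside_eq[of 4 3 m v r] wk c4 unfolding w_def by simp
  show ?thesis
    unfolding SQP_def s0 s1 s2 s3 lab_def ori_def edir_def
    using fa fb ab bS by (simp add: a_def[symmetric] mem_flip)
qed

lemma SQP_rel:
  assumes v: "v \<in> Kverts m" and j: "1 \<le> j" "j \<le> m"
  shows "SQP m (v, m + j)"
proof -
  define q where "q = m + j + 1"
  define \<alpha> where "\<alpha> = DD m m v q"
  define u where "u = flip \<alpha> v"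
  have S1: "Sq m m j q q"
    using Sq_mono[OF j(2) _ Sq_stage(1)[OF j]] unfolding q_def by simp
  have S2: "Sq m m q (m + j) j"
    using Sq_mono[OF j(2) _ Sq_stage(2)[OF j]] unfolding q_def by simp
  have uq: "DD m m u q = \<alpha>"
    using Sq_inv[of m m q] unfolding Sq_def u_def \<alpha>_def by simp
  have vu: "v = flip \<alpha> u" unfolding u_def by simp
  define \<beta> where "\<beta> = DD m m u j"
  have f1: "DD m m (flip \<beta> u) q = \<alpha>" using S1 uq unfolding Sq_def \<beta>_def by metis
  have f2: "DD m m v (m + j) = \<beta>" using S2 uq vu unfolding Sq_def \<beta>_def by metis
  have f3: "DD m m (flip \<beta> v) (m + j) = \<beta>"
    using Sq_inv[of m m "m+j"] f2 unfolding Sq_def by metis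
  have ab: "\<alpha> \<noteq> \<beta>" unfolding \<beta>_def uq[symmetric] q_def using DD_inj by fastforce
  define w where "w = relword m (m + j)"
  have w: "w = [(q,False),(j,True),(q,True),(m + j,False)]"
    using j unfolding w_def relword_def q_def by simp
  have wk: "w!0 = (q,False)" "w!1 = (j,True)" "w!2 = (q,True)" "w!3 = (m + j,False)"
    using w by simp_all
  have rg: "q \<in> {1..2*m+1}" "j \<in> {1..2*m+1}" "m + j \<in> {1..2*m+1}"
    using j unfolding q_def by auto
  have ku: "u \<in> Kverts m" using act_Kverts[OF v rg(1)] by (simp add: act_flip u_def \<alpha>_def)
  have k3: "flip \<beta> v \<in> Kverts m"
    using act_Kverts[OF v rg(3)] by (simp only: act_flip f2)
  have c1: "corner m v w 1 = u"
  proof -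
    have "corner m v w 1 = step m (corner m v w 0) (w!0)" by (rule corner_step) simp
    also have "\<dots> = act m q v" unfolding wk corner.simps(1) by (rule step_eq[OF v rg(1)])
    finally show ?thesis by (simp add: act_flip u_def \<alpha>_def)
  qed
  have c2: "corner m v w 2 = flip \<beta> u"
  proof -
    have "corner m v w 2 = step m (corner m v w 1) (w!1)" by (rule corner_step) simp
    also have "\<dots> = act m j u" unfolding c1 wk by (simp add: step_def)
    also have "\<dots> = flip \<beta> u" by (simp only: act_flip \<beta>_def)
    finally show ?thesis .
  qed
  have c3: "corner m v w 3 = flip \<beta> v"
  proof -
    have "corner m v w 3 = step m (corner m v w 2) (w!2)" by (rule corner_step) simp
    also have "\<dots> = act m q (flip \<beta> u)" unfolding c2 wk by (simp add: step_def)
    also have "\<dots> = flip \<beta> v" unfolding act_flip f1 vu by (simp add: flip_comm[of \<alpha> \<beta>])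
    finally show ?thesis .
  qed
  have c4: "corner m v w 4 = v"
  proof -
    have "corner m v w 4 = step m (corner m v w 3) (w!3)" by (rule corner_step) simp
    also have "\<dots> = act m (m + j) (flip \<beta> v)" unfolding c3 wk by (rule step_eq[OF k3 rg(3)])
    also have "\<dots> = v" unfolding act_flip f3 by simp
    finally show ?thesis .
  qed
  have s0: "Kside m (v, m + j) 0 = ((u, q), False)"
    using Kside_eq[of 1 0 m v "m + j"] wk c1 unfolding w_def by simp
  have s1: "Kside m (v, m + j) 1 = ((u, j), True)"
    using Kside_eq[of 2 1 m v "m + j"] wk c1 unfolding w_def by simp
  have s2: "Kside m (v, m + j) 2 = ((flip \<beta> u, q), True)"
    using Kside_eq[of 3 2 m v "m + j"] wk c2 unfolding w_def by simp
  have s3: "Kside m (v, m + j) 3 = ((v, m + j), False)"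
    using Kside_eq[of 4 3 m v "m + j"] wk c4 unfolding w_def by simp
  show ?thesis
    unfolding SQP_def s0 s1 s2 s3 lab_def ori_def edir_def
    using f1 f2 ab uq by (simp add: \<beta>_def[symmetric] vu mem_flip)
qed

lemma SQP_all: "s \<in> Ksquares m \<Longrightarrow> SQP m s"
proof -
  assume "s \<in> Ksquares m"
  then obtain v r where s: "s = (v, r)" "v \<in> Kverts m" "1 \<le> r" "r \<le> 2 * m"
    unfolding Ksquares_def by auto
  show ?thesis
  proof (cases "r \<le> m")
    case True then show ?thesis using SQP_comm s by simp
  next
    case False
    define j where "j = r - m"
    have "r = m + j" "1 \<le> j" "j \<le> m" using False s unfolding j_def by auto
    then show ?thesis using SQP_rel s by simp
  qed
qed

lemma opp_lab:
  assumes "opp_sides (Ksquares m) (Kside m) e f"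
  shows "lab m e = lab m f"
proof -
  obtain s k where s: "s \<in> Ksquares m" "k < 4" "fst (Kside m s k) = e"
    "fst (Kside m s ((k + 2) mod 4)) = f"
    using assms unfolding opp_sides_def by blast
  have P: "SQP m s" using SQP_all s(1) .
  have L1: "lab m (fst (Kside m s 0)) = lab m (fst (Kside m s 2))"
    and L2: "lab m (fst (Kside m s 1)) = lab m (fst (Kside m s 3))"
    using P unfolding SQP_def by blast+
  have "k = 0 \<or> k = 1 \<or> k = 2 \<or> k = 3" using s(2) by auto
  then show ?thesis
  proof (elim disjE)
    assume k: "k = 0"
    then have "(k + 2) mod 4 = 2" by simp
    then show ?thesis using L1 s(3,4) k by metis
  next
    assume k: "k = 1"
    then have "(k + 2) mod 4 = 3" by simp
    then show ?thesis using L2 s(3,4) k by metis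
  next
    assume k: "k = 2"
    then have "(k + 2) mod 4 = 0" by simp
    then show ?thesis using L1 s(3,4) k by metis
  next
    assume k: "k = 3"
    then have "(k + 2) mod 4 = 1" by simp
    then show ?thesis using L2 s(3,4) k by metis
  qed
qed

lemma rt_lab:
  assumes "(opp_sides (Ksquares m) (Kside m))\<^sup>*\<^sup>* e f"
  shows "lab m e = lab m f"
  using assms by (induction rule: rtranclp_induct) (auto dest: opp_lab)

theorem proposition6p4:
  fixes m :: nat
  assumes "m \<ge> 1"
  shows "(\<forall>H \<in> hyperplanes (Kedges m) (Ksquares m) (Kside m).
            \<not> self_intersects (Ksquares m) (Kside m) H)
       \<and> (\<forall>H \<in> hyperplanes (Kedges m) (Ksquares m) (Kside m).
            \<not> self_osculates (Ksquares m) (Kside m) (Kends m) H)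
       \<and> (\<forall>H \<in> hyperplanes (Kedges m) (Ksquares m) (Kside m).
            two_sided (Ksquares m) (Kside m) H)"
proof (intro conjI ballI)
  fix H assume "H \<in> hyperplanes (Kedges m) (Ksquares m) (Kside m)"
  then obtain e where H: "H = {f \<in> Kedges m. (opp_sides (Ksquares m) (Kside m))\<^sup>*\<^sup>* e f}"
    unfolding hyperplanes_def by blast
  have HL: "\<And>f. f \<in> H \<Longrightarrow> lab m f = lab m e" using rt_lab H by fastforce
  show "\<not> self_intersects (Ksquares m) (Kside m) H"
  proof
    assume "self_intersects (Ksquares m) (Kside m) H"
    then obtain s where s: "s \<in> Ksquares m" "fst (Kside m s 0) \<in> H" "fst (Kside m s 1) \<in> H"
      unfolding self_intersects_def by blast
    have "lab m (fst (Kside m s 0)) = lab m (fst (Kside m s 1))" using HL s by simp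
    moreover have "edir m (fst (Kside m s 0)) \<noteq> edir m (fst (Kside m s 1))"
      using SQP_all[OF s(1)] unfolding SQP_def by blast
    ultimately show False unfolding lab_def by simp
  qed
  show "\<not> self_osculates (Ksquares m) (Kside m) (Kends m) H"
  proof
    assume "self_osculates (Ksquares m) (Kside m) (Kends m) H"
    then obtain e1 e2 where e: "e1 \<in> H" "e2 \<in> H" "e1 \<noteq> e2" "Kends m e1 \<inter> Kends m e2 \<noteq> {}"
      unfolding self_osculates_def by blast
    obtain x i where e1: "e1 = (x, i)" by (cases e1)
    obtain y j where e2: "e2 = (y, j)" by (cases e2)
    have L: "lab m e1 = lab m e2" using HL e by simp
    define d where "d = DD m m x i"
    have dy: "DD m m y j = d" using L unfolding lab_def edir_def e1 e2 d_def by simp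
    have l1: "lab m e1 = (d, d \<in> x)" unfolding lab_def edir_def e1 d_def by simp
    have l2: "lab m e2 = (d, d \<in> y)" unfolding lab_def edir_def e2 using dy by simp
    have dm: "(d \<in> x) = (d \<in> y)" using L l1 l2 by simp
    have en1: "Kends m e1 = {x, flip d x}"
      unfolding Kends_def e1 act_flip d_def by simp
    have en2: "Kends m e2 = {y, flip d y}"
      unfolding Kends_def e2 act_flip using dy by simp
    note en = en1 en2
    have "x = y"
    proof -
      have "x = y \<or> x = flip d y \<or> flip d x = y \<or> flip d x = flip d y"
        using e(4) unfolding en by auto
      moreover have "x \<noteq> flip d y" using dm by (auto simp: mem_flip)
      moreover have "flip d x \<noteq> y" using dm by (auto simp: mem_flip)
      moreover have "flip d x = flip d y \<Longrightarrow> x = y" by (metis flip_flip)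
      ultimately show ?thesis by blast
    qed
    then have "i = j" using dy DD_inj unfolding d_def by metis
    then show False using e(3) \<open>x = y\<close> e1 e2 by simp
  qed
  show "two_sided (Ksquares m) (Kside m) H"
    unfolding two_sided_def
  proof (intro exI ballI allI impI)
    fix s k assume s: "s \<in> Ksquares m" "k < (2::nat)"
    have P: "SQP m s" using SQP_all s(1) .
    have O2: "ori m (fst (Kside m s 2)) = (snd (Kside m s 2) = (ori m (fst (Kside m s 0)) \<noteq> snd (Kside m s 0)))"
      and O3: "ori m (fst (Kside m s 3)) = (snd (Kside m s 3) = (ori m (fst (Kside m s 1)) \<noteq> snd (Kside m s 1)))"
      using P unfolding SQP_def by blast+
    have "k = 0 \<or> k = 1" using s(2) by auto
    then show "ori m (fst (Kside m s k)) = (snd (Kside m s k) = (ori m (fst (Kside m s k)) = snd (Kside m s k))) \<and>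
       ori m (fst (Kside m s (k + 2))) = (snd (Kside m s (k + 2)) = (\<not> (ori m (fst (Kside m s k)) = snd (Kside m s k))))"
    proof (elim disjE)
      assume k: "k = 0"
      have kk: "k + 2 = 2" using k by simp
      show ?thesis unfolding kk using O2 k by auto
    next
      assume k: "k = 1"
      have kk: "k + 2 = 3" using k by simp
      show ?thesis unfolding kk using O3 k by auto
    qed
  qed
qed

end
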